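(* Fix $p\in(0,1)$, $q=1-p$, and for $0\le k\le n$ let $w_{n,k}:=\frac{(n)_k}{n^k}q^{k(k+1)/2}$ with $(n)_k=n(n-1)\cdots(n-k+1)$ and $w_{n,0}=1$. Let $\nu_n$ be the stationary law of the careless count chain. There exist constants $0<c_p<C_p<\infty$ and an integer $M_p<\infty$ such that for all sufficiently large $n$ and all $M_p\le k\le n$, $c_pw_{n,k}\le\nu_n(k)\le C_pw_{n,k}$. In particular $\nu_n(n)=\Theta_p\!\left(\frac{n!}{n^n}q^{n(n+1)/2}\right)$.
   Context: The careless count chain $(K_t)$ on $\{0,\dots,n\}$: given $K_t=k$, with probability $k/n$ one has $K_{t+1}\sim\mathrm{Bin}(k,q)$, and with probability $(n-k)/n$ one has $K_{t+1}\sim\mathrm{Bin}(k+1,q)$. It is irreducible and aperiodic with unique stationary law $\nu_n$. $\Theta_p(\cdot)$ means bounded above and below by positive constants depending only on $p$. *)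

theory Defs
  imports Complex_Main
begin

definition binom_pmf :: "nat \<Rightarrow> real \<Rightarrow> nat \<Rightarrow> real" where
  "binom_pmf m q j = real (m choose j) * q ^ j * (1 - q) ^ (m - j)"

definition careless_P :: "real \<Rightarrow> nat \<Rightarrow> nat \<Rightarrow> nat \<Rightarrow> real" where
  "careless_P p n k j =
     (real k / real n) * binom_pmf k (1 - p) j
     + (real (n - k) / real n) * binom_pmf (k + 1) (1 - p) j"

definition careless_stationary :: "real \<Rightarrow> nat \<Rightarrow> (nat \<Rightarrow> real) \<Rightarrow> bool" where
  "careless_stationary p n \<nu> \<longleftrightarrow>
     (\<forall>j. 0 \<le> \<nu> j) \<and> (\<forall>j>n. \<nu> j = 0) \<and> (\<Sum>j\<le>n. \<nu> j) = 1 \<and>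
     (\<forall>j\<le>n. \<nu> j = (\<Sum>k\<le>n. \<nu> k * careless_P p n k j))"

text \<open>The (unique) stationary law \<nu>_n.\<close>
definition careless_nu :: "real \<Rightarrow> nat \<Rightarrow> nat \<Rightarrow> real" where
  "careless_nu p n = (THE \<nu>. careless_stationary p n \<nu>)"

definition careless_w :: "real \<Rightarrow> nat \<Rightarrow> nat \<Rightarrow> real" where
  "careless_w p n k = (\<Prod>i<k. real (n - i)) / real n ^ k * (1 - p) ^ (k * (k + 1) div 2)"

end

theory Submission
  imports Defs
begin


lemma binom_zero: "m < i \<Longrightarrow> binom_pmf m x i = 0"
  by (simp add: binom_pmf_def)

lemma binom_nonneg: "0 \<le> x \<Longrightarrow> x \<le> 1 \<Longrightarrow> 0 \<le> binom_pmf m x i"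
  by (simp add: binom_pmf_def)

lemma binom_sum: assumes "m \<le> M" shows "(\<Sum>i\<le>M. binom_pmf m x i) = 1"
proof -
  have "(\<Sum>i\<le>M. binom_pmf m x i) = (\<Sum>i\<le>m. binom_pmf m x i)"
    using assms by (intro sum.mono_neutral_right) (auto simp: binom_zero)
  also have "\<dots> = (x + (1 - x)) ^ m"
    unfolding binomial_ring binom_pmf_def by simp
  finally show ?thesis by simp
qed

lemma P_zero: "k + 1 < j \<Longrightarrow> careless_P p n k j = 0"
  by (simp add: careless_P_def binom_zero)

lemma P_sum: assumes "0 < n" "k \<le> n" "k + 1 \<le> m"
  shows "(\<Sum>i\<le>m. careless_P p n k i) = 1"
proof -
  have "(\<Sum>i\<le>m. careless_P p n k i) = real k / real n * (\<Sum>i\<le>m. binom_pmf k (1-p) i)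
     + real (n - k) / real n * (\<Sum>i\<le>m. binom_pmf (k+1) (1-p) i)"
    unfolding careless_P_def by (simp add: sum.distrib sum_distrib_left)
  also have "\<dots> = real k / real n + real (n - k) / real n"
    using assms by (simp add: binom_sum)
  also have "\<dots> = 1" using assms by (simp add: of_nat_diff field_simps)
  finally show ?thesis .
qed

lemma P_sum_n: assumes "0 < n" "k \<le> n"
  shows "(\<Sum>i\<le>n. careless_P p n k i) = 1"
proof (cases "k < n")
  case True thus ?thesis using assms P_sum by simp
next
  case False
  then have "k = n" using assms by simp
  then show ?thesis using assms by (simp add: careless_P_def binom_sum)
qed

lemma P_nonneg: "0 \<le> p \<Longrightarrow> p \<le> 1 \<Longrightarrow> k \<le> n \<Longrightarrow> 0 \<le> careless_P p n k j"
  unfolding careless_P_def by (intro add_nonneg_nonneg mult_nonneg_nonneg binom_nonneg) auto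

lemma P_up: "careless_P p n j (Suc j) = real (n - j) / real n * (1 - p) ^ Suc j"
  by (simp add: careless_P_def binom_pmf_def)

lemma P_zero_lb: assumes "0 < n" "k \<le> n" "0 < p" "p < 1"
  shows "p ^ (k+1) \<le> careless_P p n k 0"
proof -
  have e: "careless_P p n k 0 = real k / real n * p ^ k + real (n - k) / real n * p ^ (k+1)"
    by (simp add: careless_P_def binom_pmf_def)
  have "p ^ (k+1) \<le> p ^ k" using assms by (simp add: power_decreasing)
  then have "real k / real n * p ^ (k+1) \<le> real k / real n * p ^ k"
    by (intro mult_left_mono) auto
  moreover have "real k / real n + real (n - k) / real n = 1"
    using assms by (simp add: of_nat_diff field_simps)
  ultimately show ?thesis unfolding e by (metis add_right_mono distrib_right mult_1)
qed

lemma P_diag_ub: assumes "0 < n" "k \<le> n" "0 < p" "p < 1"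
  shows "careless_P p n k k + careless_P p n k (Suc k) \<le> (real k + 2) * (1-p) ^ k"
proof -
  define a where "a = real k / real n"
  define b where "b = real (n - k) / real n"
  have ab: "a + b = 1" "0 \<le> a" "0 \<le> b" using assms by (auto simp: a_def b_def of_nat_diff field_simps)
  have e1: "careless_P p n k k = a * (1-p)^k + b * ((real k + 1) * (1-p)^k * p)"
    by (simp add: careless_P_def binom_pmf_def a_def b_def)
  have e2: "careless_P p n k (Suc k) = b * (1-p)^Suc k"
    by (simp add: P_up b_def)
  have q0: "0 \<le> (1-p)^k" using assms by simp
  have f1: "(real k + 1) * (1-p)^k * p \<le> (real k + 1) * (1-p)^k"
    using mult_left_mono[of p 1 "(real k+1)*(1-p)^k"] assms q0 by simp
  have f2: "(1-p)^k \<le> (real k + 1) * (1-p)^k" using q0 by (simp add: algebra_simps)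
  have "a * (1-p)^k + b * ((real k + 1) * (1-p)^k * p) \<le> a * ((real k + 1) * (1-p)^k) + b * ((real k + 1) * (1-p)^k)"
    by (intro add_mono mult_left_mono f2 f1 ab(2) ab(3))
  then have "careless_P p n k k \<le> (a + b) * ((real k + 1) * (1-p)^k)"
    unfolding e1 by (simp only: distrib_right)
  moreover have "careless_P p n k (Suc k) \<le> (1-p)^k"
  proof -
    have "(1-p)^Suc k \<le> (1-p)^k" using assms by (simp add: power_decreasing)
    moreover have "b \<le> 1" using ab by simp
    ultimately show ?thesis unfolding e2 using ab q0 assms
      by (metis mult_le_one mult_right_mono order_trans mult_1 zero_le_power  diff_ge_0_iff_ge less_imp_le power_le_one)
  qed
  ultimately show ?thesis using ab by (simp add: algebra_simps)
qed



definition cum :: "real \<Rightarrow> nat \<Rightarrow> nat \<Rightarrow> nat \<Rightarrow> real" where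
  "cum p n k j = (\<Sum>i\<le>j. careless_P p n k i)"

definition bal :: "real \<Rightarrow> nat \<Rightarrow> (nat \<Rightarrow> real) \<Rightarrow> bool" where
  "bal p n \<nu> \<longleftrightarrow> (\<forall>j\<le>n. \<nu> j = (\<Sum>k\<le>n. \<nu> k * careless_P p n k j))"

definition cut :: "real \<Rightarrow> nat \<Rightarrow> (nat \<Rightarrow> real) \<Rightarrow> bool" where
  "cut p n \<nu> \<longleftrightarrow> (\<forall>j<n. \<nu> j * careless_P p n j (Suc j) = (\<Sum>k\<in>{j<..n}. \<nu> k * cum p n k j))"

lemma cum_nonneg: "0 \<le> p \<Longrightarrow> p \<le> 1 \<Longrightarrow> k \<le> n \<Longrightarrow> 0 \<le> cum p n k j"
  unfolding cum_def by (intro sum_nonneg P_nonneg) auto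

lemma cum_compl: assumes "0 < n" "k \<le> n" "k \<le> j"
  shows "cum p n k j = 1 - careless_P p n k (Suc j)"
  using P_sum[of n k "Suc j" p] assms by (simp add: cum_def)

lemma cum_n: assumes "0 < n" "k \<le> n" shows "cum p n k n = 1"
  using P_sum_n[OF assms] by (simp add: cum_def)

lemma cum_down: assumes "0 < n" "Suc k \<le> n"
  shows "cum p n (Suc k) k = 1 - careless_P p n (Suc k) (Suc k) - careless_P p n (Suc k) (Suc (Suc k))"
  using P_sum[of n "Suc k" "Suc (Suc k)" p] assms by (simp add: cum_def)

lemma sum_cum: "(\<Sum>k\<le>n. \<nu> k * cum p n k j) = (\<Sum>i\<le>j. \<Sum>k\<le>n. \<nu> k * careless_P p n k i)"
  unfolding cum_def by (simp add: sum_distrib_left sum.swap[of _ "{..j}"])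

lemma KI: assumes "0 < n" "j < n"
  shows "(\<Sum>k\<le>n. \<nu> k * cum p n k j) = (\<Sum>i\<le>j. \<nu> i) - \<nu> j * careless_P p n j (Suc j)
            + (\<Sum>k\<in>{j<..n}. \<nu> k * cum p n k j)"
proof -
  have sp: "{..n} = {..j} \<union> {j<..n}" using assms by auto
  have "(\<Sum>k\<le>n. \<nu> k * cum p n k j) = (\<Sum>k\<le>j. \<nu> k * cum p n k j) + (\<Sum>k\<in>{j<..n}. \<nu> k * cum p n k j)"
    unfolding sp by (rule sum.union_disjoint) auto
  moreover have "(\<Sum>k\<le>j. \<nu> k * cum p n k j) = (\<Sum>k\<le>j. \<nu> k - \<nu> k * careless_P p n k (Suc j))"
    using assms by (intro sum.cong) (auto simp: cum_compl algebra_simps)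
  moreover have "(\<Sum>k\<le>j. \<nu> k * careless_P p n k (Suc j)) = \<nu> j * careless_P p n j (Suc j)"
  proof (cases j)
    case 0 then show ?thesis by simp
  next
    case (Suc j')
    have "(\<Sum>k\<le>j'. \<nu> k * careless_P p n k (Suc j)) = 0"
      using Suc by (intro sum.neutral) (auto simp: P_zero)
    then show ?thesis using Suc by simp
  qed
  ultimately show ?thesis by (simp add: sum_subtractf)
qed

lemma bal_cut: assumes "0 < n" "bal p n \<nu>" shows "cut p n \<nu>"
  unfolding cut_def
proof (intro allI impI)
  fix j assume j: "j < n"
  have "(\<Sum>k\<le>n. \<nu> k * cum p n k j) = (\<Sum>i\<le>j. \<nu> i)"
    unfolding sum_cum using assms j unfolding bal_def by (intro sum.cong) auto
  then show "\<nu> j * careless_P p n j (Suc j) = (\<Sum>k\<in>{j<..n}. \<nu> k * cum p n k j)"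
    using KI[OF assms(1) j, of \<nu> p] by simp
qed

lemma cut_bal: assumes "0 < n" "cut p n \<nu>" shows "bal p n \<nu>"
proof -
  define B where "B i = (\<Sum>k\<le>n. \<nu> k * careless_P p n k i)" for i
  have T: "(\<Sum>i\<le>j. B i) = (\<Sum>i\<le>j. \<nu> i)" if "j \<le> n" for j
  proof (cases "j = n")
    case True
    have "(\<Sum>i\<le>j. B i) = (\<Sum>k\<le>n. \<nu> k * cum p n k n)"
      unfolding B_def sum_cum True ..
    also have "\<dots> = (\<Sum>k\<le>n. \<nu> k)" using assms by (intro sum.cong) (auto simp: cum_n)
    finally show ?thesis using True by simp
  next
    case False
    then have j: "j < n" using that by simp
    have "(\<Sum>i\<le>j. B i) = (\<Sum>k\<le>n. \<nu> k * cum p n k j)"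
      unfolding B_def sum_cum ..
    also have "\<dots> = (\<Sum>i\<le>j. \<nu> i)" using KI[OF assms(1) j, of \<nu> p] assms(2) j
      unfolding cut_def by simp
    finally show ?thesis .
  qed
  show ?thesis unfolding bal_def
  proof (intro allI impI)
    fix j assume j: "j \<le> n"
    show "\<nu> j = (\<Sum>k\<le>n. \<nu> k * careless_P p n k j)"
    proof (cases j)
      case 0 then show ?thesis using T[of 0] j by (simp add: B_def)
    next
      case (Suc j')
      then show ?thesis using T[of j] T[of j'] j by (simp add: B_def)
    qed
  qed
qed

lemma cut_zero: assumes "0 < n" "cut p n \<delta>" "\<delta> n = 0" "0 < p" "p < 1" "j \<le> n"
  shows "\<delta> j = 0"
  using assms(6)
proof (induction "n - j" arbitrary: j rule: less_induct)
  case less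
  show ?case
  proof (cases "j = n")
    case True then show ?thesis using assms by simp
  next
    case False
    then have j: "j < n" using less by simp
    have "(\<Sum>k\<in>{j<..n}. \<delta> k * cum p n k j) = 0"
      using less j by (intro sum.neutral) auto
    then have "\<delta> j * careless_P p n j (Suc j) = 0" using assms(2) j unfolding cut_def by simp
    moreover have "careless_P p n j (Suc j) \<noteq> 0" using j assms by (simp add: P_up)
    ultimately show ?thesis by simp
  qed
qed

lemma cut_lin: "cut p n \<mu> \<Longrightarrow> cut p n \<nu> \<Longrightarrow> cut p n (\<lambda>k. \<mu> k - c * \<nu> k)"
  unfolding cut_def by (simp add: algebra_simps sum_subtractf sum_distrib_left)



function nu0 :: "real \<Rightarrow> nat \<Rightarrow> nat \<Rightarrow> real" where
  "nu0 p n j = (if n \<le> j then (if j = n then 1 else 0)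
     else (\<Sum>k\<in>{j<..n}. nu0 p n k * cum p n k j) / careless_P p n j (Suc j))"
  by auto
termination by (relation "measure (\<lambda>(p,n,j). n - j)") auto

declare nu0.simps[simp del]

lemma nu0_cut: assumes "0 < n" "0 < p" "p < 1" shows "cut p n (nu0 p n)"
  unfolding cut_def
proof (intro allI impI)
  fix j assume j: "j < n"
  have "careless_P p n j (Suc j) \<noteq> 0" using j assms by (simp add: P_up)
  then show "nu0 p n j * careless_P p n j (Suc j) = (\<Sum>k\<in>{j<..n}. nu0 p n k * cum p n k j)"
    using j by (subst nu0.simps) simp
qed

lemma nu0_nonneg: assumes "0 < n" "0 < p" "p < 1" shows "0 \<le> nu0 p n j"
proof (induction "n - j" arbitrary: j rule: less_induct)
  case less
  show ?case
  proof (cases "n \<le> j")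
    case True then show ?thesis by (subst nu0.simps) simp
  next
    case False
    have "careless_P p n j (Suc j) > 0" using False assms by (simp add: P_up)
    moreover have "0 \<le> (\<Sum>k\<in>{j<..n}. nu0 p n k * cum p n k j)"
      using less False assms by (intro sum_nonneg mult_nonneg_nonneg cum_nonneg) auto
    ultimately show ?thesis using False by (subst nu0.simps) simp
  qed
qed

lemma stationary_exists: assumes "0 < n" "0 < p" "p < 1"
  shows "\<exists>\<nu>. careless_stationary p n \<nu>"
proof -
  define s where "s = (\<Sum>k\<le>n. nu0 p n k)"
  have "nu0 p n n \<le> s" unfolding s_def using nu0_nonneg[OF assms]
    by (intro member_le_sum) auto
  moreover have "nu0 p n n = 1" by (subst nu0.simps) simp
  ultimately have s: "s > 0" by simp
  have b: "bal p n (nu0 p n)" using cut_bal[OF assms(1) nu0_cut[OF assms]] .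
  define \<nu> where "\<nu> j = nu0 p n j / s" for j
  have "careless_stationary p n \<nu>"
    unfolding careless_stationary_def
  proof (intro conjI allI impI)
    fix j show "0 \<le> \<nu> j" using s nu0_nonneg[OF assms] by (simp add: \<nu>_def)
  next
    fix j :: nat assume "n < j" then show "\<nu> j = 0" by (simp add: \<nu>_def nu0.simps)
  next
    show "(\<Sum>j\<le>n. \<nu> j) = 1" using s by (simp add: \<nu>_def s_def[symmetric] flip: sum_divide_distrib)
  next
    fix j assume j: "j \<le> n"
    have "\<nu> j = (\<Sum>k\<le>n. nu0 p n k * careless_P p n k j) / s"
      using b j unfolding bal_def \<nu>_def by simp
    also have "\<dots> = (\<Sum>k\<le>n. \<nu> k * careless_P p n k j)"
      by (simp add: \<nu>_def sum_divide_distrib)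
    finally show "\<nu> j = (\<Sum>k\<le>n. \<nu> k * careless_P p n k j)" .
  qed
  then show ?thesis by blast
qed

lemma stat_sum: "careless_stationary p n \<nu> \<Longrightarrow> (\<Sum>j\<le>n. \<nu> j) = 1"
  unfolding careless_stationary_def by blast

lemma stat_nonneg: "careless_stationary p n \<nu> \<Longrightarrow> 0 \<le> \<nu> j"
  unfolding careless_stationary_def by blast

lemma stat_out: "careless_stationary p n \<nu> \<Longrightarrow> n < j \<Longrightarrow> \<nu> j = 0"
  unfolding careless_stationary_def by blast

lemma stat_bal: "careless_stationary p n \<nu> \<Longrightarrow> bal p n \<nu>"
  unfolding careless_stationary_def bal_def by blast

lemma stationary_unique: assumes "0 < n" "0 < p" "p < 1"
  "careless_stationary p n \<mu>" "careless_stationary p n \<nu>"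
  shows "\<mu> = \<nu>"
proof -
  have cm: "cut p n \<mu>" and cn: "cut p n \<nu>" using assms bal_cut stat_bal by blast+
  have "\<nu> n \<noteq> 0"
  proof
    assume "\<nu> n = 0"
    then have "\<forall>j\<le>n. \<nu> j = 0" using cut_zero[OF assms(1) cn] assms by blast
    then have "(\<Sum>j\<le>n. \<nu> j) = 0" by simp
    moreover have "(\<Sum>j\<le>n. \<nu> j) = 1" using assms(5) unfolding careless_stationary_def by blast
    ultimately show False by simp
  qed
  define c where "c = \<mu> n / \<nu> n"
  have "cut p n (\<lambda>k. \<mu> k - c * \<nu> k)" by (rule cut_lin[OF cm cn])
  moreover have "\<mu> n - c * \<nu> n = 0" using \<open>\<nu> n \<noteq> 0\<close> by (simp add: c_def)
  ultimately have z: "\<forall>j\<le>n. \<mu> j - c * \<nu> j = 0" using cut_zero[OF assms(1)] assms(2,3) by blast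
  then have "(\<Sum>j\<le>n. \<mu> j) = c * (\<Sum>j\<le>n. \<nu> j)" by (simp add: sum_distrib_left)
  then have "c = 1" using stat_sum[OF assms(4)] stat_sum[OF assms(5)] by simp
  show "\<mu> = \<nu>"
  proof
    fix j show "\<mu> j = \<nu> j"
    proof (cases "j \<le> n")
      case True then show ?thesis using z \<open>c = 1\<close> by simp
    next
      case False then show ?thesis using stat_out[OF assms(4)] stat_out[OF assms(5)] by simp
    qed
  qed
qed

lemma nu_stationary: assumes "0 < n" "0 < p" "p < 1"
  shows "careless_stationary p n (careless_nu p n)"
proof -
  obtain \<nu> where "careless_stationary p n \<nu>" using stationary_exists[OF assms] by blast
  then have "\<exists>!\<nu>. careless_stationary p n \<nu>" using stationary_unique[OF assms] by blast
  then show ?thesis unfolding careless_nu_def by (rule theI')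
qed
  


lemma exp_step: "Suc k * (Suc k + 1) div 2 = k * (k + 1) div 2 + Suc k"
proof -
  have "Suc k * (Suc k + 1) = k * (k + 1) + 2 * Suc k" by (simp add: algebra_simps)
  then show ?thesis by simp
qed

lemma k_le_exp: "(k::nat) \<le> k * (k + 1) div 2"
proof (cases k)
  case (Suc m) then show ?thesis using exp_step[of m] by simp
qed simp

lemma w_step: assumes "0 < n"
  shows "careless_w p n (Suc k) = careless_w p n k * careless_P p n k (Suc k)"
  unfolding careless_w_def P_up exp_step using assms
  by (simp add: power_add field_simps)

lemma w_0: "careless_w p n 0 = 1" by (simp add: careless_w_def)

lemma w_pos: assumes "k \<le> n" "0 < n" "p < 1" shows "0 < careless_w p n k"
  unfolding careless_w_def using assms by (intro mult_pos_pos divide_pos_pos prod_pos) auto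

lemma w_le: assumes "k \<le> n" "0 < n" "0 < p" "p < 1" shows "careless_w p n k \<le> (1-p) ^ k"
proof -
  have "(\<Prod>i<k. real (n - i)) \<le> (\<Prod>i<k. real n)" by (intro prod_mono) auto
  then have a: "(\<Prod>i<k. real (n - i)) / real n ^ k \<le> 1" using assms by simp
  have b: "(1-p) ^ (k * (k + 1) div 2) \<le> (1-p) ^ k"
    using assms by (intro power_decreasing) (use k_le_exp[of k] in auto)
  have c: "0 \<le> (\<Prod>i<k. real (n - i)) / real n ^ k" by (simp add: prod_nonneg)
  have "careless_w p n k \<le> 1 * (1-p) ^ (k * (k + 1) div 2)"
    unfolding careless_w_def using a assms by (intro mult_right_mono) auto
  then show ?thesis using b by simp
qed

lemma w_lb: assumes "2 * M \<le> n" "0 < n" "0 < p" "p < 1"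
  shows "(1/2) ^ M * (1-p) ^ (M * (M + 1) div 2) \<le> careless_w p n M"
proof -
  have "(\<Prod>i<M. real n / 2) \<le> (\<Prod>i<M. real (n - i))"
    using assms by (intro prod_mono) (auto simp: of_nat_diff)
  then have "(real n / 2) ^ M \<le> (\<Prod>i<M. real (n - i))" by simp
  then have "(real n / 2) ^ M / real n ^ M \<le> (\<Prod>i<M. real (n - i)) / real n ^ M"
    using assms by (intro divide_right_mono) auto
  moreover have "(real n / 2) ^ M / real n ^ M = (1/2) ^ M" using assms by (simp add: power_divide)
  ultimately show ?thesis unfolding careless_w_def using assms
    by (intro mult_right_mono) auto
qed

lemma w_n: assumes "0 < n"
  shows "careless_w p n n = fact n / real n ^ n * (1 - p) ^ (n * (n + 1) div 2)"
proof -
  have "(\<Prod>i<n. real (n - i)) = real (\<Prod>i = 0..<n. n - i)" by (simp add: atLeast0LessThan)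
  then show ?thesis unfolding careless_w_def fact_prod_rev[of n] by simp
qed

lemma choose_rho: assumes "0 < q" "q < 1"
  shows "\<exists>\<rho> M. 0 < \<rho> \<and> \<rho> < 1 \<and> (\<forall>j\<ge>M. 2 * (real j + 3) * q ^ (j+1) \<le> (1 - \<rho>) * \<rho> ^ j)"
proof -
  define \<rho> where "\<rho> = sqrt q"
  have r: "0 < \<rho>" "\<rho> < 1" using assms by (auto simp: \<rho>_def)
  have "(\<lambda>j. of_nat j * \<rho> ^ j + 3 * \<rho> ^ j) \<longlonglongrightarrow> 0 + 3 * 0"
    using r by (intro tendsto_add tendsto_mult powser_times_n_limit_0 LIMSEQ_power_zero tendsto_const) auto
  then have "(\<lambda>j. (real j + 3) * \<rho> ^ j) \<longlonglongrightarrow> 0" by (simp add: algebra_simps)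
  moreover have "0 < (1 - \<rho>) / 2" using r by simp
  ultimately have "eventually (\<lambda>j. (real j + 3) * \<rho> ^ j < (1 - \<rho>) / 2) sequentially"
    by (rule order_tendstoD)
  then obtain M where M: "\<And>j. j \<ge> M \<Longrightarrow> (real j + 3) * \<rho> ^ j < (1 - \<rho>) / 2"
    unfolding eventually_sequentially by blast
  have "2 * (real j + 3) * q ^ (j+1) \<le> (1 - \<rho>) * \<rho> ^ j" if j: "j \<ge> M" for j
  proof -
    have qq: "q ^ (j+1) = \<rho> ^ j * (\<rho> ^ j * \<rho>^2)"
      using assms by (simp add: \<rho>_def power_mult_distrib[symmetric] power_add[symmetric] flip: power_mult)
    have "(real j + 3) * \<rho> ^ j * \<rho>^2 \<le> (real j + 3) * \<rho> ^ j"
      using r by (intro mult_right_le_one_le mult_nonneg_nonneg) (auto simp: power_le_one)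
    then have "2 * ((real j + 3) * \<rho> ^ j * \<rho>^2) \<le> 1 - \<rho>" using M[OF j] by (simp add: field_simps)
    then have "\<rho> ^ j * (2 * ((real j + 3) * \<rho> ^ j * \<rho>^2)) \<le> \<rho> ^ j * (1 - \<rho>)"
      using r by (intro mult_left_mono) auto
    then show ?thesis unfolding qq by (simp add: algebra_simps)
  qed
  then show ?thesis using r by blast
qed



lemma lower_mono: assumes "0 < n" "0 < p" "p < 1" "k \<le> n"
  shows "careless_nu p n 0 * careless_w p n k \<le> careless_nu p n k"
  using assms(4)
proof (induction k)
  case 0 then show ?case by (simp add: w_0)
next
  case (Suc k)
  let ?\<nu> = "careless_nu p n"
  have st: "careless_stationary p n ?\<nu>" using nu_stationary assms by blast
  have "?\<nu> (Suc k) = (\<Sum>i\<le>n. ?\<nu> i * careless_P p n i (Suc k))"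
    using stat_bal[OF st] Suc.prems unfolding bal_def by blast
  also have "\<dots> \<ge> ?\<nu> k * careless_P p n k (Suc k)"
    using Suc.prems assms stat_nonneg[OF st]
    by (intro member_le_sum mult_nonneg_nonneg P_nonneg) auto
  finally have a: "?\<nu> k * careless_P p n k (Suc k) \<le> ?\<nu> (Suc k)" .
  have "?\<nu> 0 * careless_w p n k * careless_P p n k (Suc k) \<le> ?\<nu> k * careless_P p n k (Suc k)"
    using Suc assms by (intro mult_right_mono P_nonneg) auto
  then show ?case using a w_step[OF assms(1), of p k] by (simp add: mult.assoc)
qed

lemma up_step: assumes "0 < n" "0 < p" "p < 1" "Suc k \<le> n"
  shows "careless_nu p n (Suc k) * cum p n (Suc k) k \<le> careless_nu p n k * careless_P p n k (Suc k)"
proof -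
  let ?\<nu> = "careless_nu p n"
  have st: "careless_stationary p n ?\<nu>" using nu_stationary assms by blast
  have "cut p n ?\<nu>" using bal_cut[OF assms(1) stat_bal[OF st]] .
  then have e: "?\<nu> k * careless_P p n k (Suc k) = (\<Sum>i\<in>{k<..n}. ?\<nu> i * cum p n i k)"
    using assms unfolding cut_def by auto
  have "?\<nu> (Suc k) * cum p n (Suc k) k \<le> (\<Sum>i\<in>{k<..n}. ?\<nu> i * cum p n i k)"
    using assms stat_nonneg[OF st]
    by (intro member_le_sum mult_nonneg_nonneg cum_nonneg) auto
  then show ?thesis using e by simp
qed

lemma cum_lb: assumes "0 < n" "0 < p" "p < 1" "Suc k \<le> n"
  shows "1 - (real (Suc k) + 2) * (1-p) ^ (Suc k) \<le> cum p n (Suc k) k"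
  using cum_down[OF assms(1,4), of p] P_diag_ub[OF assms(1,4,2,3)] by simp

lemma D_ineq: fixes \<rho> x :: real assumes "0 < \<rho>" "\<rho> < 1" "0 \<le> x" "2 * x \<le> (1 - \<rho>) * \<rho> ^ k"
  shows "2 - \<rho> ^ k \<le> (2 - \<rho> ^ Suc k) * (1 - x)"
proof -
  have y: "0 \<le> \<rho> ^ k" "\<rho> ^ k \<le> 1" using assms by (auto simp: power_le_one)
  have "x * \<rho> ^ Suc k \<ge> 0" using assms by simp
  then show ?thesis using assms(4) y by (simp add: algebra_simps)
qed



lemma upper_chain:
  assumes n: "0 < n" and p: "0 < p" "p < 1" and r: "0 < \<rho>" "\<rho> < 1"
    and hM: "\<forall>j\<ge>M. 2 * (real j + 3) * (1-p) ^ (j+1) \<le> (1 - \<rho>) * \<rho> ^ j"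
    and k: "M \<le> k" "k \<le> n"
  shows "careless_nu p n k * (careless_w p n M * (2 - \<rho> ^ M))
           \<le> careless_nu p n M * careless_w p n k * (2 - \<rho> ^ k)"
  using k
proof (induction k)
  case 0 then show ?case by simp
next
  case (Suc k)
  let ?\<nu> = "careless_nu p n"
  have st: "careless_stationary p n ?\<nu>" using nu_stationary n p by blast
  show ?case
  proof (cases "M = Suc k")
    case True then show ?thesis by simp
  next
    case False
    then have Mk: "M \<le> k" using Suc by simp
    have IH: "?\<nu> k * (careless_w p n M * (2 - \<rho> ^ M)) \<le> ?\<nu> M * careless_w p n k * (2 - \<rho> ^ k)"
      using Suc Mk by simp
    define A where "A = careless_w p n M * (2 - \<rho> ^ M)"
    define x where "x = (real (Suc k) + 2) * (1-p) ^ (Suc k)"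
    define c where "c = cum p n (Suc k) k"
    define a where "a = careless_P p n k (Suc k)"
    have "\<rho> ^ M \<le> 1" using r by (simp add: power_le_one)
    then have A0: "0 \<le> A" unfolding A_def using w_pos[of M n p] Suc Mk n p r
      by (intro mult_nonneg_nonneg) auto
    have xe: "x = (real k + 3) * (1-p) ^ (k+1)" unfolding x_def by simp
    have "2 * (real k + 3) * (1-p)^(k+1) \<le> (1-\<rho>)*\<rho>^k" using hM Mk by blast
    then have hx: "2 * x \<le> (1 - \<rho>) * \<rho> ^ k" unfolding xe by (simp only: mult.assoc)
    have x0: "0 \<le> x" using p by (simp add: x_def)
    have "\<rho> ^ k \<le> 1" using r by (simp add: power_le_one)
    then have "(1 - \<rho>) * \<rho> ^ k \<le> 1" using r by (intro mult_le_one) auto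
    then have "(1 - \<rho>) * \<rho> ^ k < 2" by simp
    then have "x < 1" using hx by simp
    have c1: "1 - x \<le> c" unfolding c_def x_def using cum_lb[OF n p Suc.prems(2)] .
    then have c0: "0 < c" using \<open>x < 1\<close> by simp
    have s1: "?\<nu> (Suc k) * c \<le> ?\<nu> k * a" unfolding c_def a_def using up_step[OF n p Suc.prems(2)] .
    have a0: "0 \<le> a" unfolding a_def using p Suc by (intro P_nonneg) auto
    have "?\<nu> (Suc k) * A * c = (?\<nu> (Suc k) * c) * A" by simp
    also have "\<dots> \<le> (?\<nu> k * a) * A" using s1 A0 by (rule mult_right_mono)
    also have "\<dots> = (?\<nu> k * A) * a" by simp
    also have "\<dots> \<le> (?\<nu> M * careless_w p n k * (2 - \<rho> ^ k)) * a"
      using IH a0 unfolding A_def by (rule mult_right_mono)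
    also have "\<dots> = ?\<nu> M * careless_w p n (Suc k) * (2 - \<rho> ^ k)"
      using w_step[OF n, of p k] by (simp add: a_def)
    also have "\<dots> \<le> ?\<nu> M * careless_w p n (Suc k) * ((2 - \<rho> ^ Suc k) * (1 - x))"
      using D_ineq[OF r x0 hx] stat_nonneg[OF st, of M] w_pos[of "Suc k" n p] Suc.prems n p
      by (intro mult_left_mono mult_nonneg_nonneg) auto
    also have "\<dots> \<le> ?\<nu> M * careless_w p n (Suc k) * ((2 - \<rho> ^ Suc k) * c)"
      using c1 power_le_one[of \<rho> "Suc k"] stat_nonneg[OF st, of M] w_pos[of "Suc k" n p] Suc.prems n p r
      by (intro mult_left_mono mult_nonneg_nonneg) (auto simp: power_le_one intro: less_imp_le)
    finally have "?\<nu> (Suc k) * A * c \<le> (?\<nu> M * careless_w p n (Suc k) * (2 - \<rho> ^ Suc k)) * c"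
      by (simp add: mult.assoc)
    then show ?thesis using c0 unfolding A_def by simp
  qed
qed



theorem mainTheorem10:
  fixes p :: real
  assumes "0 < p" and "p < 1"
  shows "(\<exists>c C :: real. \<exists>M :: nat. 0 < c \<and> c < C \<and>
            (\<exists>N. \<forall>n\<ge>N. \<forall>k. M \<le> k \<and> k \<le> n \<longrightarrow>
               c * careless_w p n k \<le> careless_nu p n k \<and>
               careless_nu p n k \<le> C * careless_w p n k))
       \<and> (\<exists>c C :: real. 0 < c \<and> 0 < C \<and>
            (\<exists>N. \<forall>n\<ge>N.
               c * (fact n / real n ^ n * (1 - p) ^ (n * (n + 1) div 2)) \<le> careless_nu p n n \<and>
               careless_nu p n n \<le> C * (fact n / real n ^ n * (1 - p) ^ (n * (n + 1) div 2))))"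
proof -
  have p: "0 < p" "p < 1" using assms by auto
  obtain \<rho> M where r: "0 < \<rho>" "\<rho> < 1"
    and hM: "\<forall>j\<ge>M. 2 * (real j + 3) * (1-p) ^ (j+1) \<le> (1 - \<rho>) * \<rho> ^ j"
    using choose_rho[of "1-p"] p by auto
  define W where "W = (1/2) ^ M * (1-p) ^ (M * (M + 1) div 2)"
  have W0: "0 < W" using p by (simp add: W_def)
  have W1: "W \<le> 1" unfolding W_def using p by (intro mult_le_one) (auto simp: power_le_one)
  define C0 where "C0 = 2 / W"
  have C0: "2 \<le> C0" using W0 W1 by (simp add: C0_def field_simps)
  have upper: "careless_nu p n k \<le> C0 * careless_w p n k"
    if n: "0 < n" "2 * M \<le> n" and k: "M \<le> k" "k \<le> n" for n k
  proof -
    let ?\<nu> = "careless_nu p n"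
    have st: "careless_stationary p n ?\<nu>" using nu_stationary n p by blast
    have "?\<nu> M \<le> (\<Sum>j\<le>n. ?\<nu> j)" using k stat_nonneg[OF st]
      by (intro member_le_sum) auto
    then have nM: "?\<nu> M \<le> 1" using stat_sum[OF st] by simp
    have wk: "0 < careless_w p n k" using w_pos k n p by simp
    have wM: "W \<le> careless_w p n M" using w_lb[OF n(2) n(1) p] by (simp add: W_def)
    have rM: "1 \<le> 2 - \<rho> ^ M" "2 - \<rho> ^ k \<le> 2" using r by (auto simp: power_le_one)
    have "?\<nu> k * W \<le> ?\<nu> k * (careless_w p n M * (2 - \<rho> ^ M))"
    proof -
      have "careless_w p n M * 1 \<le> careless_w p n M * (2 - \<rho> ^ M)"
        using rM(1) wM W0 by (intro mult_left_mono) auto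
      then have "W \<le> careless_w p n M * (2 - \<rho> ^ M)" using wM by simp
      then show ?thesis using stat_nonneg[OF st, of k] by (intro mult_left_mono) auto
    qed
    also have "\<dots> \<le> ?\<nu> M * careless_w p n k * (2 - \<rho> ^ k)"
      using upper_chain[OF n(1) p r hM k] .
    also have "\<dots> \<le> 1 * careless_w p n k * 2"
      using nM wk rM stat_nonneg[OF st, of M] power_le_one[of \<rho> k] r by (intro mult_mono) auto
    finally have "?\<nu> k * W \<le> 2 * careless_w p n k" by simp
    then show ?thesis using W0 by (simp add: C0_def field_simps)
  qed
  have "0 < p / (2 * C0)" using p C0 by simp
  then obtain L1 where L1: "(1-p) ^ L1 < p / (2 * C0)" using real_arch_pow_inv[of _ "1-p"] p by auto
  define L where "L = max M L1"
  have "(1-p) ^ (L+1) \<le> (1-p) ^ L1" using p by (intro power_decreasing) (auto simp: L_def)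
  then have qa: "C0 * (1-p) ^ (L+1) \<le> C0 * (1-p) ^ L1" using C0 by (intro mult_left_mono) auto
  have "C0 * (1-p) ^ L1 < p / 2" using L1 C0 by (simp add: pos_less_divide_eq field_simps)
  with qa have qL: "C0 * (1-p) ^ (L+1) \<le> p / 2" by simp
  define N where "N = 2 * M + L + 1"
  define c where "c = p ^ (L+1) / 2"
  have c0: "0 < c" using p by (simp add: c_def)
  have "p ^ (L+1) \<le> 1" using p by (intro power_le_one) auto
  then have c1: "c \<le> 1/2" by (simp add: c_def)
  have lower: "c * careless_w p n k \<le> careless_nu p n k"
    if n: "N \<le> n" and k: "k \<le> n" for n k
  proof -
    let ?\<nu> = "careless_nu p n"
    have n0: "0 < n" using n by (simp add: N_def)
    have st: "careless_stationary p n ?\<nu>" using nu_stationary n0 p by blast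
    have split: "{..n} = {..L} \<union> {Suc L..n}" using n by (auto simp: N_def)
    have "(\<Sum>j\<le>n. ?\<nu> j) = (\<Sum>j\<le>L. ?\<nu> j) + (\<Sum>j=Suc L..n. ?\<nu> j)"
      unfolding split by (rule sum.union_disjoint) auto
    then have s1: "(\<Sum>j\<le>L. ?\<nu> j) = 1 - (\<Sum>j=Suc L..n. ?\<nu> j)" using stat_sum[OF st] by simp
    have "(\<Sum>j=Suc L..n. ?\<nu> j) \<le> (\<Sum>j=Suc L..n. C0 * (1-p) ^ j)"
    proof (intro sum_mono)
      fix j assume j: "j \<in> {Suc L..n}"
      then have "?\<nu> j \<le> C0 * careless_w p n j" using n0 n by (intro upper) (auto simp: N_def L_def)
      also have "\<dots> \<le> C0 * (1-p) ^ j" using w_le[of j n p] j n0 p C0 by (intro mult_left_mono) auto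
      finally show "?\<nu> j \<le> C0 * (1-p) ^ j" .
    qed
    also have "\<dots> = C0 * (\<Sum>j=Suc L..n. (1-p) ^ j)" by (simp add: sum_distrib_left)
    also have "\<dots> \<le> 1/2"
    proof -
      have gp: "(1 - (1-p)) * (\<Sum>j=Suc L..n. (1-p) ^ j) = (1-p) ^ Suc L - (1-p) ^ Suc n"
        using n by (intro sum_gp_multiplied) (simp add: N_def)
      define S where "S = (\<Sum>j=Suc L..n. (1-p) ^ j)"
      have "p * S \<le> (1-p) ^ (L+1)" using p gp unfolding S_def by simp
      then have "C0 * (p * S) \<le> C0 * (1-p) ^ (L+1)" using C0 by (intro mult_left_mono) auto
      moreover have "p * (C0 * S) = C0 * (p * S)" by (simp only: ac_simps)
      ultimately have "p * (C0 * S) \<le> p * (1/2)" using qL by linarith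
      then show ?thesis using p unfolding S_def by simp
    qed
    finally have half: "1/2 \<le> (\<Sum>j\<le>L. ?\<nu> j)" using s1 by simp
    have "?\<nu> 0 = (\<Sum>j\<le>n. ?\<nu> j * careless_P p n j 0)"
      using stat_bal[OF st] unfolding bal_def by blast
    also have "\<dots> \<ge> (\<Sum>j\<le>L. ?\<nu> j * careless_P p n j 0)"
      using n stat_nonneg[OF st] p
      by (intro sum_mono2 mult_nonneg_nonneg P_nonneg) (auto simp: N_def)
    finally have a: "(\<Sum>j\<le>L. ?\<nu> j * careless_P p n j 0) \<le> ?\<nu> 0" .
    have "(\<Sum>j\<le>L. ?\<nu> j * p ^ (L+1)) \<le> (\<Sum>j\<le>L. ?\<nu> j * careless_P p n j 0)"
    proof (intro sum_mono mult_left_mono)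
      fix j assume j: "j \<in> {..L}"
      have "p ^ (L+1) \<le> p ^ (j+1)" using j p by (intro power_decreasing) auto
      also have "\<dots> \<le> careless_P p n j 0" using j n n0 p by (intro P_zero_lb) (auto simp: N_def)
      finally show "p ^ (L+1) \<le> careless_P p n j 0" .
    qed (use stat_nonneg[OF st] in auto)
    then have "p ^ (L+1) * (\<Sum>j\<le>L. ?\<nu> j) \<le> ?\<nu> 0" using a by (simp add: sum_distrib_left mult.commute)
    moreover have "p ^ (L+1) * (1/2) \<le> p ^ (L+1) * (\<Sum>j\<le>L. ?\<nu> j)" using half p by simp
    ultimately have "c \<le> ?\<nu> 0" by (simp add: c_def)
    then have "c * careless_w p n k \<le> ?\<nu> 0 * careless_w p n k"
      using w_pos[of k n p] k n0 p by (intro mult_right_mono) auto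
    also have "\<dots> \<le> ?\<nu> k" using lower_mono[OF n0 p k] .
    finally show ?thesis .
  qed
  have part1: "\<exists>c C :: real. \<exists>M :: nat. 0 < c \<and> c < C \<and>
            (\<exists>N. \<forall>n\<ge>N. \<forall>k. M \<le> k \<and> k \<le> n \<longrightarrow>
               c * careless_w p n k \<le> careless_nu p n k \<and>
               careless_nu p n k \<le> C * careless_w p n k)"
    using c0 c1 C0 lower upper
    by (intro exI[of _ c] exI[of _ C0] exI[of _ M] conjI exI[of _ N]) (auto simp: N_def)
  have part2: "\<exists>c C :: real. 0 < c \<and> 0 < C \<and>
            (\<exists>N. \<forall>n\<ge>N.
               c * (fact n / real n ^ n * (1 - p) ^ (n * (n + 1) div 2)) \<le> careless_nu p n n \<and>
               careless_nu p n n \<le> C * (fact n / real n ^ n * (1 - p) ^ (n * (n + 1) div 2)))"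
  proof -
    have "\<forall>n\<ge>N. c * (fact n / real n ^ n * (1 - p) ^ (n * (n + 1) div 2)) \<le> careless_nu p n n \<and>
               careless_nu p n n \<le> C0 * (fact n / real n ^ n * (1 - p) ^ (n * (n + 1) div 2))"
    proof (intro allI impI conjI)
      fix n assume n: "N \<le> n"
      then have n0: "0 < n" by (simp add: N_def)
      show "c * (fact n / real n ^ n * (1 - p) ^ (n * (n + 1) div 2)) \<le> careless_nu p n n"
        using lower[OF n order_refl] w_n[OF n0, of p] by simp
      show "careless_nu p n n \<le> C0 * (fact n / real n ^ n * (1 - p) ^ (n * (n + 1) div 2))"
        using upper[OF n0 _ _ order_refl] n w_n[OF n0, of p] by (simp add: N_def)
    qed
    moreover have "0 < C0" using C0 by simp
    ultimately show ?thesis using c0 by blast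
  qed
  show ?thesis using part1 part2 by blast
qed


end
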